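(* Let $\mu_1,\mu_2,\beta>0$, $p>2$, $c_1,c_2>0$ with $c_1+c_2<4^{\frac{p-2}{2p-3}}\big[\frac{p(p-2)^{p-2}}{K_{2p}\mu_0(p-1)^p}\big]^{\frac1{2p-3}}$, $\mu_0=\max\{\mu_1+\beta,\mu_2+\beta\}$. Then $Q(u)+Q(v)<\frac{p-1}{p-2}\frac{(c_1+c_2)^2}4$ for all $(u,v)\in\Omega^+(c_1,c_2)$, and $Q(u)+Q(v)>\frac{p-1}{p-2}\frac{(c_1+c_2)^2}4$ for all $(u,v)\in\Omega^-(c_1,c_2)$.
   Context: $E:=\{u\in H^1(\mathbb{R}^2):\int\log(1+|x|^2)u^2dx<\infty\}$; $S(c):=\{w\in E:\int w^2dx=c\}$. $Q(u)=\int|\nabla u|^2$, $R(u,v)=\mu_1\int|u|^{2p}+\mu_2\int|v|^{2p}+2\beta\int|uv|^p$, $W_0(u,v)=\iint\log|x-y|(u^2(x)+v^2(x))(u^2(y)+v^2(y))dxdy$. For $(u,v)\in S(c_1)\times S(c_2)$ and $t>0$, $F_{u,v}(t)=\frac{t^2}2(Q(u)+Q(v))+\frac14[W_0(u,v)-(c_1+c_2)^2\log t]-\frac{t^{2p-2}}{2p}R(u,v)$. $\Omega^{\pm}(c_1,c_2)$ is the set of $(u,v)\in S(c_1)\times S(c_2)$ with $F'_{u,v}(1)=0$ and $\pm F''_{u,v}(1)>0$. $K_{2p}$ is the best constant in $\|u\|_{2p}^{2p}\le K_{2p}\|\nabla u\|_2^{2p-2}\|u\|_2^2$ on $H^1(\mathbb{R}^2)$.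 *)

theory Defs
  imports "HOL-Analysis.Analysis"
begin

type_synonym pt = "real ^ 2"

definition pderiv2 :: "(pt \<Rightarrow> real) \<Rightarrow> 2 \<Rightarrow> pt \<Rightarrow> real" where
  "pderiv2 f i x = frechet_derivative f (at x) (axis i 1)"

text \<open>C-infinity: all iterated partial derivatives exist and are differentiable everywhere.\<close>
definition smooth2 :: "(pt \<Rightarrow> real) \<Rightarrow> bool" where
  "smooth2 f \<longleftrightarrow> (\<exists>S. f \<in> S \<and> (\<forall>g\<in>S. (\<forall>x. g differentiable (at x)) \<and>
                        (\<forall>i. pderiv2 g i \<in> S)))"

definition test_fun :: "(pt \<Rightarrow> real) \<Rightarrow> bool" where
  "test_fun \<phi> \<longleftrightarrow> smooth2 \<phi> \<and> compact (closure {x. \<phi> x \<noteq> 0})"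

definition is_weak_grad :: "(pt \<Rightarrow> real) \<Rightarrow> (pt \<Rightarrow> pt) \<Rightarrow> bool" where
  "is_weak_grad u g \<longleftrightarrow> g \<in> borel_measurable lborel \<and>
     integrable lborel (\<lambda>x. (norm (g x))\<^sup>2) \<and>
     (\<forall>\<phi>. test_fun \<phi> \<longrightarrow> (\<forall>i.
        (\<integral>x. u x * pderiv2 \<phi> i x \<partial>lborel) = - (\<integral>x. g x $ i * \<phi> x \<partial>lborel)))"

definition H1 :: "(pt \<Rightarrow> real) set" where
  "H1 = {u. u \<in> borel_measurable lborel \<and> integrable lborel (\<lambda>x. (u x)\<^sup>2) \<and>
            (\<exists>g. is_weak_grad u g)}"

definition wgrad :: "(pt \<Rightarrow> real) \<Rightarrow> pt \<Rightarrow> pt" where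
  "wgrad u = (SOME g. is_weak_grad u g)"

definition E :: "(pt \<Rightarrow> real) set" where
  "E = {u \<in> H1. integrable lborel (\<lambda>x. ln (1 + (norm x)\<^sup>2) * (u x)\<^sup>2)}"

definition S :: "real \<Rightarrow> (pt \<Rightarrow> real) set" where
  "S c = {w \<in> E. (\<integral>x. (w x)\<^sup>2 \<partial>lborel) = c}"

definition Q :: "(pt \<Rightarrow> real) \<Rightarrow> real" where
  "Q u = (\<integral>x. (norm (wgrad u x))\<^sup>2 \<partial>lborel)"

definition R :: "real \<Rightarrow> real \<Rightarrow> real \<Rightarrow> real \<Rightarrow> (pt \<Rightarrow> real) \<Rightarrow> (pt \<Rightarrow> real) \<Rightarrow> real" where
  "R p \<mu>1 \<mu>2 \<beta> u v = \<mu>1 * (\<integral>x. \<bar>u x\<bar> powr (2*p) \<partial>lborel)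
      + \<mu>2 * (\<integral>x. \<bar>v x\<bar> powr (2*p) \<partial>lborel)
      + 2 * \<beta> * (\<integral>x. \<bar>u x * v x\<bar> powr p \<partial>lborel)"

definition W0 :: "(pt \<Rightarrow> real) \<Rightarrow> (pt \<Rightarrow> real) \<Rightarrow> real" where
  "W0 u v = (\<integral>x. (\<integral>y. ln (dist x y) * ((u x)\<^sup>2 + (v x)\<^sup>2) * ((u y)\<^sup>2 + (v y)\<^sup>2) \<partial>lborel) \<partial>lborel)"

definition F :: "real \<Rightarrow> real \<Rightarrow> real \<Rightarrow> real \<Rightarrow> real \<Rightarrow> real \<Rightarrow> (pt \<Rightarrow> real) \<Rightarrow> (pt \<Rightarrow> real) \<Rightarrow> real \<Rightarrow> real" where
  "F p \<mu>1 \<mu>2 \<beta> c1 c2 u v t =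
     t\<^sup>2 / 2 * (Q u + Q v) + 1/4 * (W0 u v - (c1 + c2)\<^sup>2 * ln t)
     - t powr (2*p - 2) / (2*p) * R p \<mu>1 \<mu>2 \<beta> u v"

definition Omega_plus where
  "Omega_plus p \<mu>1 \<mu>2 \<beta> c1 c2 = {(u, v). u \<in> S c1 \<and> v \<in> S c2 \<and>
     deriv (F p \<mu>1 \<mu>2 \<beta> c1 c2 u v) 1 = 0 \<and>
     deriv (deriv (F p \<mu>1 \<mu>2 \<beta> c1 c2 u v)) 1 > 0}"

definition Omega_minus where
  "Omega_minus p \<mu>1 \<mu>2 \<beta> c1 c2 = {(u, v). u \<in> S c1 \<and> v \<in> S c2 \<and>
     deriv (F p \<mu>1 \<mu>2 \<beta> c1 c2 u v) 1 = 0 \<and>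
     deriv (deriv (F p \<mu>1 \<mu>2 \<beta> c1 c2 u v)) 1 < 0}"

text \<open>Best Gagliardo-Nirenberg constant K_{2p} on H^1(R^2).\<close>
definition K :: "real \<Rightarrow> real" where
  "K p = Inf {k. \<forall>u\<in>H1. (\<integral>x. \<bar>u x\<bar> powr (2*p) \<partial>lborel)
                \<le> k * (sqrt (Q u)) powr (2*p - 2) * (\<integral>x. (u x)\<^sup>2 \<partial>lborel)}"

end

theory Submission
  imports Defs
begin

lemma F_der:
  assumes "t > 0" "p \<noteq> 0"
  shows "(F p \<mu>1 \<mu>2 \<beta> c1 c2 u v has_real_derivative
     (t * (Q u + Q v) - (c1+c2)\<^sup>2 / (4*t)
      - (2*p-2)/(2*p) * t powr (2*p-3) * R p \<mu>1 \<mu>2 \<beta> u v)) (at t)"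
proof -
  have "((\<lambda>t. t\<^sup>2 / 2 * (Q u + Q v) + 1/4 * (W0 u v - (c1 + c2)\<^sup>2 * ln t)
     - t powr (2*p - 2) / (2*p) * R p \<mu>1 \<mu>2 \<beta> u v) has_real_derivative
     (2*t/2 * (Q u + Q v) + 1/4 * (0 - (c1+c2)\<^sup>2 * (1/t))
      - ((2*p-2) * t powr (2*p-2-1)) / (2*p) * R p \<mu>1 \<mu>2 \<beta> u v)) (at t)"
    using assms
    by (auto intro!: derivative_eq_intros)
  moreover have "(2*p-2-1) = 2*p-3" by simp
  ultimately show ?thesis
    unfolding F_def[abs_def] by (simp add: field_simps)
qed

lemma G_der:
  assumes "t > 0"
  shows "((\<lambda>t. t * A - D / (4*t) - k * t powr (2*p-3) * B) has_real_derivative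
     (A + D / (4*t^2) - k * ((2*p-3) * t powr (2*p-4)) * B)) (at t)"
proof -
  have "((\<lambda>t. t * A - D / (4*t) - k * t powr (2*p-3) * B) has_real_derivative
     (1 * A - (- (D * (4 * 1)) / (4*t * (4*t))) - k * ((2*p-3) * t powr (2*p-3-1)) * B)) (at t)"
    using assms by (auto intro!: derivative_eq_intros simp: power2_eq_square)
  moreover have "(2*p-3-1) = 2*p-4" by simp
  ultimately show ?thesis by (simp add: field_simps power2_eq_square)
qed

lemma derivs:
  assumes "p \<noteq> 0" shows "deriv (F p \<mu>1 \<mu>2 \<beta> c1 c2 u v) 1 = (Q u + Q v) - (c1+c2)\<^sup>2/4 - (2*p-2)/(2*p) * R p \<mu>1 \<mu>2 \<beta> u v
   \<and> deriv (deriv (F p \<mu>1 \<mu>2 \<beta> c1 c2 u v)) 1 =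
     (Q u + Q v) + (c1+c2)\<^sup>2/4 - (2*p-2)/(2*p) * (2*p-3) * R p \<mu>1 \<mu>2 \<beta> u v"
proof -
  let ?A = "Q u + Q v" and ?D = "(c1+c2)\<^sup>2" and ?k = "(2*p-2)/(2*p)" and ?B = "R p \<mu>1 \<mu>2 \<beta> u v"
  have eq: "deriv (F p \<mu>1 \<mu>2 \<beta> c1 c2 u v) t = t * ?A - ?D / (4*t) - ?k * t powr (2*p-3) * ?B"
    if "t \<in> {0<..}" for t
    using F_der[of t] that assms by (intro DERIV_imp_deriv) auto
  have "(deriv (F p \<mu>1 \<mu>2 \<beta> c1 c2 u v) has_real_derivative
     (?A + ?D / (4*1^2) - ?k * ((2*p-3) * 1 powr (2*p-4)) * ?B)) (at 1)"
    by (rule has_field_derivative_transform_within_open[OF G_der[of 1], of "{0<..}"]) (auto simp: eq)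
  from DERIV_imp_deriv[OF this] eq[of 1] show ?thesis by simp
qed

theorem lemma4p7:
  fixes p \<mu>1 \<mu>2 \<beta> c1 c2 :: real
  assumes "\<mu>1 > 0" "\<mu>2 > 0" "\<beta> > 0" "p > 2" "c1 > 0" "c2 > 0"
    and "c1 + c2 < 4 powr ((p - 2) / (2*p - 3)) *
           (p * (p - 2) powr (p - 2) / (K p * max (\<mu>1 + \<beta>) (\<mu>2 + \<beta>) * (p - 1) powr p))
             powr (1 / (2*p - 3))"
  shows "(\<forall>(u, v) \<in> Omega_plus p \<mu>1 \<mu>2 \<beta> c1 c2.
            Q u + Q v < (p - 1) / (p - 2) * (c1 + c2)\<^sup>2 / 4)
       \<and> (\<forall>(u, v) \<in> Omega_minus p \<mu>1 \<mu>2 \<beta> c1 c2.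
            Q u + Q v > (p - 1) / (p - 2) * (c1 + c2)\<^sup>2 / 4)"
proof -
  have key: "(p-2) * (Q u + Q v) - (p-1) * ((c1+c2)\<^sup>2/4) =
      - deriv (deriv (F p \<mu>1 \<mu>2 \<beta> c1 c2 u v)) 1 / 2"
    if "deriv (F p \<mu>1 \<mu>2 \<beta> c1 c2 u v) 1 = 0" for u v
  proof -
    let ?A = "Q u + Q v" and ?C = "(c1+c2)\<^sup>2/4" and ?B = "R p \<mu>1 \<mu>2 \<beta> u v"
    have d: "?A - ?C - (2*p-2)/(2*p) * ?B = 0"
      "deriv (deriv (F p \<mu>1 \<mu>2 \<beta> c1 c2 u v)) 1 = ?A + ?C - (2*p-2)/(2*p) * (2*p-3) * ?B"
      using derivs[of p \<mu>1 \<mu>2 \<beta> c1 c2 u v] that assms by auto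
    have "(2*p-2)/(2*p) * ?B = ?A - ?C" using d(1) by simp
    hence "deriv (deriv (F p \<mu>1 \<mu>2 \<beta> c1 c2 u v)) 1 = ?A + ?C - (2*p-3) * (?A - ?C)"
      using d(2) by (metis mult.commute mult.assoc)
    also have "\<dots> = (4-2*p)*?A + (2*p-2)*?C" by (simp add: field_simps)
    finally have e: "deriv (deriv (F p \<mu>1 \<mu>2 \<beta> c1 c2 u v)) 1 = (4-2*p)*?A + (2*p-2)*?C" .
    show ?thesis unfolding e by (simp add: algebra_simps)
  qed
  have p2: "p - 2 > 0" using assms by simp
  show ?thesis
  proof (intro conjI ballI; clarify)
    fix u v assume "(u, v) \<in> Omega_plus p \<mu>1 \<mu>2 \<beta> c1 c2"
    hence h: "deriv (F p \<mu>1 \<mu>2 \<beta> c1 c2 u v) 1 = 0" "deriv (deriv (F p \<mu>1 \<mu>2 \<beta> c1 c2 u v)) 1 > 0"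
      unfolding Omega_plus_def by auto
    have "(p-2) * (Q u + Q v) < (p-1) * ((c1+c2)\<^sup>2/4)" using key[OF h(1)] h(2) by linarith
    thus "Q u + Q v < (p - 1) / (p - 2) * (c1 + c2)\<^sup>2 / 4" using p2
      by (simp add: field_simps)
  next
    fix u v assume "(u, v) \<in> Omega_minus p \<mu>1 \<mu>2 \<beta> c1 c2"
    hence h: "deriv (F p \<mu>1 \<mu>2 \<beta> c1 c2 u v) 1 = 0" "deriv (deriv (F p \<mu>1 \<mu>2 \<beta> c1 c2 u v)) 1 < 0"
      unfolding Omega_minus_def by auto
    have "(p-2) * (Q u + Q v) > (p-1) * ((c1+c2)\<^sup>2/4)" using key[OF h(1)] h(2) by linarith
    thus "Q u + Q v > (p - 1) / (p - 2) * (c1 + c2)\<^sup>2 / 4" using p2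
      by (simp add: field_simps)
  qed
qed

end
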